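(* Let $h>0$, $0<\alpha\le 0.1$, and let $\overline S=\{(kh,h):k\in\mathbb Z\}\subseteq S$ be the camera grid of resolution $\delta_d=h$. For every target $g\in G$, $$\overline\varepsilon(g)\;\le\;1.72\,\varepsilon(g,S),\qquad\text{where }\ \overline\varepsilon(g)=\min_{s_i,s_j\in\overline S}\varepsilon(g,\{s_i,s_j\}).$$
   Context: Work in $\mathbb{R}^2$ with coordinates $(x,z)$. The ground line is $G=\{z=0\}$ and the viewing line is $S=\{z=h\}$. For a point $s$ and unit vector $u$, the wedge $W(s,u)=\{s+rv:\ r\ge0,\ |v|=1,\ \angle(v,u)\le\alpha\}$ (opening angle $2\alpha$). For target $g$ and camera $s$, $\mathcal W(g,s)$ is the set of all wedges $W(s,u)$ containing $g$. For $C\subseteq S$, $\varepsilon(g,C)=\sup\{\operatorname{diam}(\bigcap_{s\in C}W_s): W_s\in\mathcal W(g,s)\ \forall s\in C\}$. *)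

theory Defs
  imports "HOL-Analysis.Analysis"
begin

type_synonym pt = "real \<times> real"  (* (x,z) *)

definition vec_angle :: "pt \<Rightarrow> pt \<Rightarrow> real" where
  "vec_angle v u = arccos ((v \<bullet> u) / (norm v * norm u))"

definition wedge :: "real \<Rightarrow> pt \<Rightarrow> pt \<Rightarrow> pt set" where
  "wedge \<alpha> s u = {s + r *\<^sub>R v | r v. r \<ge> 0 \<and> norm v = 1 \<and> vec_angle v u \<le> \<alpha>}"

definition wedges :: "real \<Rightarrow> pt \<Rightarrow> pt \<Rightarrow> pt set set" where
  "wedges \<alpha> g s = {wedge \<alpha> s u | u. norm u = 1 \<and> g \<in> wedge \<alpha> s u}"

definition ediam :: "pt set \<Rightarrow> ereal" where
  "ediam A = Sup {ereal (dist x y) | x y. x \<in> A \<and> y \<in> A}"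

definition eps :: "real \<Rightarrow> pt \<Rightarrow> pt set \<Rightarrow> ereal" where
  "eps \<alpha> g C = Sup {ediam (\<Inter>s\<in>C. W s) | W. \<forall>s\<in>C. W s \<in> wedges \<alpha> g s}"

definition ground :: "pt set" where "ground = {p. snd p = 0}"
definition viewline :: "real \<Rightarrow> pt set" where "viewline h = {p. snd p = h}"
definition grid :: "real \<Rightarrow> pt set" where "grid h = {(of_int k * h, h) | k. True}"

end

theory Submission
  imports Defs
begin


definition cr :: "pt \<Rightarrow> pt \<Rightarrow> real" where
  "cr a b = fst a * snd b - snd a * fst b"

lemma norm_pt: "norm (p::pt) = sqrt ((fst p)^2 + (snd p)^2)"
  by (simp add: norm_prod_def)

lemma inner_pt: "inner (p::pt) q = fst p * fst q + snd p * snd q"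
  by (simp add: inner_prod_def)

lemma norm_pt_sq: "(norm (p::pt))^2 = (fst p)^2 + (snd p)^2"
  by (simp add: norm_pt)

lemma wedge_iff:
  assumes u: "norm u = 1" and a0: "0 \<le> \<alpha>" and api: "\<alpha> \<le> pi"
  shows "q \<in> wedge \<alpha> s u \<longleftrightarrow> norm (q - s) * cos \<alpha> \<le> inner (q - s) u"
proof
  assume "q \<in> wedge \<alpha> s u"
  then obtain r v where q: "q = s + r *\<^sub>R v" and r: "r \<ge> 0" and v: "norm v = 1"
    and ang: "vec_angle v u \<le> \<alpha>" unfolding wedge_def by blast
  have ang2: "arccos (inner v u) \<le> \<alpha>" using ang v u by (simp add: vec_angle_def)
  have b: "\<bar>inner v u\<bar> \<le> 1" using Cauchy_Schwarz_ineq2[of v u] v u by simp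
  have "cos \<alpha> \<le> cos (arccos (inner v u))"
  proof (rule cos_monotone_0_pi_le)
    show "0 \<le> arccos (inner v u)" using arccos_bounded[of "inner v u"] b by linarith
    show "arccos (inner v u) \<le> \<alpha>" by (rule ang2)
    show "\<alpha> \<le> pi" by (rule api)
  qed
  also have "\<dots> = inner v u" using b by (simp add: cos_arccos_abs)
  finally have cv: "cos \<alpha> \<le> inner v u" .
  have "norm (q - s) = r" using q r v by simp
  moreover have "inner (q - s) u = r * inner v u" using q by simp
  ultimately show "norm (q - s) * cos \<alpha> \<le> inner (q - s) u"
    using cv r by (simp add: mult_left_mono)
next
  assume h: "norm (q - s) * cos \<alpha> \<le> inner (q - s) u"
  show "q \<in> wedge \<alpha> s u"
  proof (cases "q = s")
    case True
    have "inner u u = 1" using u by (simp add: power2_norm_eq_inner[symmetric])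
    then have "vec_angle u u = 0" using u by (simp add: vec_angle_def)
    then have "q = s + 0 *\<^sub>R u \<and> (0::real) \<ge> 0 \<and> norm u = 1 \<and> vec_angle u u \<le> \<alpha>"
      using True u a0 by simp
    then show ?thesis unfolding wedge_def by blast
  next
    case False
    define r where "r = norm (q - s)"
    define v where "v = (1 / r) *\<^sub>R (q - s)"
    have rp: "r > 0" using False r_def by simp
    have v1: "norm v = 1" using rp by (simp add: v_def r_def)
    have qv: "q = s + r *\<^sub>R v" using rp by (simp add: v_def)
    have iv: "inner v u = inner (q - s) u / r" by (simp add: v_def)
    have "cos \<alpha> * r \<le> inner v u * r" using h rp iv by (simp add: r_def mult.commute)
    then have cv: "cos \<alpha> \<le> inner v u" using rp by simp
    have b: "\<bar>inner v u\<bar> \<le> 1" using Cauchy_Schwarz_ineq2[of v u] v1 u by simp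
    have "arccos (inner v u) \<le> arccos (cos \<alpha>)"
      apply (rule arccos_le_arccos) using cv b by auto
    also have "\<dots> = \<alpha>" using a0 api by (simp add: arccos_cos)
    finally have "vec_angle v u \<le> \<alpha>" using v1 u by (simp add: vec_angle_def)
    then show ?thesis unfolding wedge_def using qv rp v1 by (intro CollectI exI[of _ r] exI[of _ v]) auto
  qed
qed

lemma dot_cross_unit:
  assumes "norm (u::pt) = 1"
  shows "(inner v u)^2 + (cr u v)^2 = (norm v)^2"
proof -
  have "(fst u)^2 + (snd u)^2 = 1" using assms norm_pt_sq[of u] by simp
  then show ?thesis unfolding norm_pt_sq inner_pt cr_def
    by algebra
qed

lemma lagrange:
  assumes "norm (u1::pt) = 1" "norm (u2::pt) = 1"
  shows "(norm d)^2 * (1 - (inner u1 u2)^2) = (cr u1 d)^2 + (cr u2 d)^2 - 2 * cr u1 d * cr u2 d * inner u1 u2"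
proof -
  have a: "(fst u1)^2 + (snd u1)^2 = 1" using assms norm_pt_sq[of u1] by simp
  have b: "(fst u2)^2 + (snd u2)^2 = 1" using assms norm_pt_sq[of u2] by simp
  show ?thesis unfolding norm_pt_sq inner_pt cr_def using a b
    by algebra
qed



lemma cone_cross:
  assumes u: "norm (u::pt) = 1" and h: "norm v * c \<le> inner v u" and c: "c > 0"
    and cs: "c^2 + s^2 = 1" and s: "s \<ge> 0"
  shows "c * \<bar>cr u v\<bar> \<le> s * inner v u"
proof -
  define m where "m = inner v u"
  have m0: "m \<ge> 0" using h c m_def by (metis mult_nonneg_nonneg norm_ge_zero order_trans less_imp_le)
  have id: "m^2 + (cr u v)^2 = (norm v)^2" using dot_cross_unit[OF u, of v] m_def by simp
  have "(norm v * c)^2 \<le> m^2" using h m_def norm_ge_zero c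
    by (metis less_imp_le mult_nonneg_nonneg power_mono)
  then have "c^2 * (norm v)^2 \<le> m^2" by (simp add: power_mult_distrib mult.commute)
  then have "c^2 * (m^2 + (cr u v)^2) \<le> m^2" using id by simp
  then have "c^2 * (cr u v)^2 \<le> (1 - c^2) * m^2" by (simp add: algebra_simps)
  moreover have "1 - c^2 = s^2" using cs by simp
  ultimately have "(c * \<bar>cr u v\<bar>)^2 \<le> (s * m)^2" by (simp add: power_mult_distrib)
  then have "c * \<bar>cr u v\<bar> \<le> s * m"
    using power2_le_imp_le[of "c * \<bar>cr u v\<bar>" "s * m"] s m0 by simp
  then show ?thesis using m_def by simp
qed

lemma cr_diff: "cr u (q - p) = cr u (q - s) - cr u (p - s)"
  by (simp add: cr_def algebra_simps)

lemma pair_cross: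
  assumes u: "norm (u::pt) = 1" and a0: "0 \<le> \<alpha>" and api: "\<alpha> \<le> pi"
    and c: "cos \<alpha> > 0" and s: "sin \<alpha> \<ge> 0"
    and p: "p \<in> wedge \<alpha> s0 u" and q: "q \<in> wedge \<alpha> s0 u"
  shows "cos \<alpha> * \<bar>cr u (q - p)\<bar> \<le> sin \<alpha> * (norm (p - s0) + norm (q - s0))"
proof -
  have cs: "(cos \<alpha>)^2 + (sin \<alpha>)^2 = 1" by simp
  have hp: "norm (p - s0) * cos \<alpha> \<le> inner (p - s0) u" using p wedge_iff[OF u a0 api] by blast
  have hq: "norm (q - s0) * cos \<alpha> \<le> inner (q - s0) u" using q wedge_iff[OF u a0 api] by blast
  have 1: "cos \<alpha> * \<bar>cr u (p - s0)\<bar> \<le> sin \<alpha> * inner (p - s0) u"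
    by (rule cone_cross[OF u hp c cs s])
  have 2: "cos \<alpha> * \<bar>cr u (q - s0)\<bar> \<le> sin \<alpha> * inner (q - s0) u"
    by (rule cone_cross[OF u hq c cs s])
  have ip: "inner (p - s0) u \<le> norm (p - s0)"
    using Cauchy_Schwarz_ineq2[of "p - s0" u] u by simp
  have iq: "inner (q - s0) u \<le> norm (q - s0)"
    using Cauchy_Schwarz_ineq2[of "q - s0" u] u by simp
  have "\<bar>cr u (q - p)\<bar> \<le> \<bar>cr u (q - s0)\<bar> + \<bar>cr u (p - s0)\<bar>"
    unfolding cr_diff[of u q p s0] by linarith
  then have "cos \<alpha> * \<bar>cr u (q - p)\<bar> \<le> cos \<alpha> * \<bar>cr u (q - s0)\<bar> + cos \<alpha> * \<bar>cr u (p - s0)\<bar>"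
    using c by (simp add: distrib_left[symmetric] mult_left_mono)
  also have "\<dots> \<le> sin \<alpha> * inner (q - s0) u + sin \<alpha> * inner (p - s0) u" using 1 2 by linarith
  also have "\<dots> \<le> sin \<alpha> * norm (q - s0) + sin \<alpha> * norm (p - s0)"
    using ip iq s by (simp add: add_mono mult_left_mono)
  finally show ?thesis by (simp add: algebra_simps)
qed

lemma two_wedge:
  assumes u1: "norm (u1::pt) = 1" and u2: "norm (u2::pt) = 1"
    and k: "\<bar>inner u1 u2\<bar> \<le> \<kappa>" and k1: "\<kappa> \<le> 1"
    and a0: "0 \<le> \<alpha>" and api: "\<alpha> \<le> pi" and c: "cos \<alpha> > 0" and s: "sin \<alpha> \<ge> 0"
    and p1: "p \<in> wedge \<alpha> s1 u1" and q1: "q \<in> wedge \<alpha> s1 u1"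
    and p2: "p \<in> wedge \<alpha> s2 u2" and q2: "q \<in> wedge \<alpha> s2 u2"
    and B1: "norm (p - s1) + norm (q - s1) \<le> B1"
    and B2: "norm (p - s2) + norm (q - s2) \<le> B2"
  shows "(cos \<alpha>)^2 * (norm (q - p))^2 * (1 - \<kappa>^2)
           \<le> (sin \<alpha>)^2 * (B1^2 + B2^2 + 2 * \<kappa> * B1 * B2)"
proof -
  define x1 where "x1 = cr u1 (q - p)"
  define x2 where "x2 = cr u2 (q - p)"
  define C where "C = cos \<alpha>"
  define S where "S = sin \<alpha>"
  have k0: "\<kappa> \<ge> 0" using k by linarith
  have h1: "C * \<bar>x1\<bar> \<le> S * B1"
    using pair_cross[OF u1 a0 api c s p1 q1] B1 s unfolding x1_def C_def S_def
    by (meson mult_left_mono order_trans)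
  have h2: "C * \<bar>x2\<bar> \<le> S * B2"
    using pair_cross[OF u2 a0 api c s p2 q2] B2 s unfolding x2_def C_def S_def
    by (meson mult_left_mono order_trans)
  have C0: "C > 0" using c C_def by simp
  have S0: "S \<ge> 0" using s S_def by simp
  have lag: "(norm (q - p))^2 * (1 - (inner u1 u2)^2) = x1^2 + x2^2 - 2 * x1 * x2 * inner u1 u2"
    using lagrange[OF u1 u2, of "q - p"] x1_def x2_def by simp
  have "(inner u1 u2)^2 \<le> \<kappa>^2"
    using power_mono[OF k, of 2] by simp
  then have "(norm (q - p))^2 * (1 - \<kappa>^2) \<le> (norm (q - p))^2 * (1 - (inner u1 u2)^2)"
    by (simp add: mult_left_mono)
  also have "\<dots> \<le> x1^2 + x2^2 + 2 * \<bar>x1\<bar> * \<bar>x2\<bar> * \<kappa>"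
  proof -
    have "- (x1 * x2 * inner u1 u2) \<le> \<bar>x1 * x2 * inner u1 u2\<bar>" by linarith
    also have "\<dots> = \<bar>x1\<bar> * \<bar>x2\<bar> * \<bar>inner u1 u2\<bar>" by (simp add: abs_mult)
    also have "\<dots> \<le> \<bar>x1\<bar> * \<bar>x2\<bar> * \<kappa>" using k by (simp add: mult_left_mono)
    finally show ?thesis using lag by linarith
  qed
  finally have A: "(norm (q - p))^2 * (1 - \<kappa>^2) \<le> x1^2 + x2^2 + 2 * \<bar>x1\<bar> * \<bar>x2\<bar> * \<kappa>" .
  have e1: "(C * \<bar>x1\<bar>)^2 \<le> (S * B1)^2" using h1 C0 by (simp add: power_mono)
  have e2: "(C * \<bar>x2\<bar>)^2 \<le> (S * B2)^2" using h2 C0 by (simp add: power_mono)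
  have e3: "(C * \<bar>x1\<bar>) * (C * \<bar>x2\<bar>) \<le> (S * B1) * (S * B2)"
  proof (rule mult_mono[OF h1 h2])
    show "0 \<le> S * B1" using h1 C0 by (metis abs_ge_zero mult_nonneg_nonneg less_imp_le order_trans)
    show "0 \<le> C * \<bar>x2\<bar>" using C0 by simp
  qed
  have "C^2 * ((norm (q - p))^2 * (1 - \<kappa>^2)) \<le> C^2 * (x1^2 + x2^2 + 2 * \<bar>x1\<bar> * \<bar>x2\<bar> * \<kappa>)"
    using A by (simp add: mult_left_mono)
  also have "\<dots> = (C * \<bar>x1\<bar>)^2 + (C * \<bar>x2\<bar>)^2 + 2 * \<kappa> * ((C * \<bar>x1\<bar>) * (C * \<bar>x2\<bar>))"
    by (simp add: power2_eq_square algebra_simps)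
  also have "\<dots> \<le> (S * B1)^2 + (S * B2)^2 + 2 * \<kappa> * ((S * B1) * (S * B2))"
    using e1 e2 e3 k0 by (simp add: add_mono mult_left_mono)
  also have "\<dots> = S^2 * (B1^2 + B2^2 + 2 * \<kappa> * B1 * B2)"
    by (simp add: power2_eq_square algebra_simps)
  finally show ?thesis unfolding C_def S_def by (simp add: algebra_simps)
qed



lemma trig_facts:
  fixes \<alpha> :: real
  assumes a0: "0 < \<alpha>" and a1: "\<alpha> \<le> 1/10"
  shows "0 < sin \<alpha>" "sin \<alpha> \<le> \<alpha>" "1 - \<alpha>^2/2 \<le> cos \<alpha>" "0 < cos \<alpha>"
    "\<alpha> * ((cos \<alpha>)^2 - (sin \<alpha>)^2) \<le> sin \<alpha> * cos \<alpha>"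
proof -
  have pi3: "3 < pi" by (rule pi_gt3)
  show s0: "0 < sin \<alpha>" using a0 a1 pi3 by (intro sin_gt_zero) auto
  show sa: "sin \<alpha> \<le> \<alpha>" using a0 by (intro sin_x_le_x) auto
  have "cos \<alpha> = 1 - 2 * (sin (\<alpha>/2))^2" using cos_double_sin[of "\<alpha>/2"] by simp
  moreover have "sin (\<alpha>/2) \<le> \<alpha>/2" using a0 by (intro sin_x_le_x) auto
  moreover have "0 \<le> sin (\<alpha>/2)" using a0 a1 pi3 by (intro sin_ge_zero) auto
  ultimately have "(sin (\<alpha>/2))^2 \<le> (\<alpha>/2)^2" by (simp add: power_mono)
  moreover have "cos \<alpha> = 1 - 2 * (sin (\<alpha>/2))^2" using cos_double_sin[of "\<alpha>/2"] by simp
  ultimately show ca: "1 - \<alpha>^2/2 \<le> cos \<alpha>" by (simp add: power_divide)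
  have "\<alpha>^2 \<le> (1/10)^2" using a0 a1 by (intro power_mono) auto
  then have "\<alpha>^2 \<le> 1/100" by (simp add: power2_eq_square)
  then show c0: "0 < cos \<alpha>" using ca by linarith
  have mb: "\<bar>sin \<alpha> - (\<Sum>m<5. sin_coeff m * \<alpha> ^ m)\<bar> \<le> inverse (fact 5) * \<bar>\<alpha>\<bar> ^ 5"
    by (rule Maclaurin_sin_bound)
  have set5: "{..<5::nat} = {0,1,2,3,4}" by auto
  have sc0: "sin_coeff 0 = 0" "sin_coeff 1 = 1" "sin_coeff 2 = 0" "sin_coeff 3 = -1/6" "sin_coeff 4 = 0" "sin_coeff (Suc 0) = 1"
    by (simp_all add: sin_coeff_def fact_numeral)
  have sum5: "(\<Sum>m<5. sin_coeff m * \<alpha> ^ m) = \<alpha> - \<alpha>^3/6"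
    unfolding set5 by (simp add: sc0)
  define w where "w = \<alpha>^2/6 + \<alpha>^4/120"
  have mb2: "\<bar>sin \<alpha> - (\<alpha> - \<alpha>^3/6)\<bar> \<le> \<alpha>^5/120"
    using mb a0 unfolding sum5 by (simp add: fact_numeral)
  have weq: "\<alpha> * (1 - w) = \<alpha> - \<alpha>^3/6 - \<alpha>^5/120"
    unfolding w_def by (simp add: eval_nat_numeral algebra_simps)
  have slow: "\<alpha> * (1 - w) \<le> sin \<alpha>"
    using mb2 unfolding weq by linarith
  have "\<alpha>^2 \<le> (1/10)^2" using a0 a1 by (intro power_mono) auto
  then have a2: "\<alpha>^2 \<le> 1/100" by (simp add: power2_eq_square)
  have a4: "\<alpha>^4 \<le> \<alpha>^2" using a2 a0 by (simp add: power4_eq_xxxx power2_eq_square mult_left_le_one_le)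
  have w0: "0 \<le> w" unfolding w_def using a0 by simp
  have w1: "w \<le> \<alpha>^2 / 5" unfolding w_def using a4 zero_le_power2[of \<alpha>] by linarith
  have w2: "w \<le> 1/500" using w1 a2 by simp
  have sig0: "0 \<le> \<alpha> * (1 - w)" using w2 a0 by simp
  define s where "s = sin \<alpha>"
  define c where "c = cos \<alpha>"
  have cs: "c^2 = 1 - s^2" unfolding s_def c_def by (simp add: cos_squared_eq)
  have sq: "(\<alpha> * (1 - w))^2 \<le> s^2" using slow sig0 unfolding s_def by (simp add: power_mono)
  have sc: "\<alpha> * (1 - w) * (1 - \<alpha>^2/2) \<le> s * c"
    using slow ca sig0 c0 a2 unfolding s_def c_def by (intro mult_mono) auto
  have "(1 - w)^2 = 1 - 2 * w + w^2" by (simp add: power2_eq_square algebra_simps)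
  moreover have "0 \<le> w^2" by simp
  ultimately have omw: "(1 - w)^2 \<ge> 99/100" using w2 by linarith
  have key: "\<alpha> * (1 - 2 * (\<alpha> * (1 - w))^2) \<le> \<alpha> * (1 - w) * (1 - \<alpha>^2/2)"
  proof -
    have "\<alpha> * (1 - 2 * (\<alpha> * (1 - w))^2) = \<alpha> * (1 - 2 * \<alpha>^2 * (1 - w)^2)" by (simp add: power_mult_distrib)
    also have "\<dots> \<le> \<alpha> * (1 - 2 * \<alpha>^2 * (99/100))"
      using omw a0 by (intro mult_left_mono) (auto intro!: mult_left_mono)
    also have "\<dots> \<le> \<alpha> * ((1 - w) * (1 - \<alpha>^2/2))"
    proof (intro mult_left_mono)
      have "(1 - w) * (1 - \<alpha>^2/2) = 1 - w - \<alpha>^2/2 + w * \<alpha>^2/2" by (simp add: field_simps)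
      moreover have "0 \<le> w * \<alpha>^2/2" using w0 by simp
      ultimately show "1 - 2 * \<alpha>^2 * (99/100) \<le> (1 - w) * (1 - \<alpha>^2/2)" using w1 zero_le_power2[of \<alpha>] by linarith
    qed (use a0 in auto)
    finally show ?thesis by (simp add: algebra_simps)
  qed
  have "\<alpha> * (c^2 - s^2) = \<alpha> * (1 - 2 * s^2)" using cs by simp
  also have "\<dots> \<le> \<alpha> * (1 - 2 * (\<alpha> * (1 - w))^2)" using sq a0 by (intro mult_left_mono) auto
  also have "\<dots> \<le> s * c" using key sc by linarith
  finally show "\<alpha> * ((cos \<alpha>)^2 - (sin \<alpha>)^2) \<le> sin \<alpha> * cos \<alpha>" unfolding s_def c_def .
qed

lemma bisector:
  fixes v1 v2 :: pt
  assumes n1: "v1 \<noteq> 0" and n2: "v2 \<noteq> 0" and c: "c > 0"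
    and E: "(2 * c^2 - 1) * (norm v1 * norm v2) \<le> inner v1 v2"
  shows "\<exists>u. norm u = 1 \<and> norm v1 * c \<le> inner v1 u \<and> norm v2 * c \<le> inner v2 u"
proof -
  define e1 where "e1 = (1 / norm v1) *\<^sub>R v1"
  define e2 where "e2 = (1 / norm v2) *\<^sub>R v2"
  have N1: "norm v1 > 0" using n1 by simp
  have N2: "norm v2 > 0" using n2 by simp
  have ne1: "norm e1 = 1" using N1 by (simp add: e1_def)
  have ne2: "norm e2 = 1" using N2 by (simp add: e2_def)
  define F where "F = inner e1 e2"
  have Fv: "F = inner v1 v2 / (norm v1 * norm v2)" by (simp add: F_def e1_def e2_def)
  have FE: "2 * c^2 - 1 \<le> F" using E N1 N2 unfolding Fv by (simp add: pos_le_divide_eq)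
  have c2: "c^2 > 0" using c by simp
  have F1: "1 + F > 0" using FE c2 by linarith
  define n where "n = norm (e1 + e2)"
  have ee1: "inner e1 e1 = 1" using ne1 by (simp add: power2_norm_eq_inner[symmetric])
  have ee2: "inner e2 e2 = 1" using ne2 by (simp add: power2_norm_eq_inner[symmetric])
  have n2: "n^2 = 2 + 2 * F"
    unfolding n_def F_def power2_norm_eq_inner
    by (simp add: inner_add_left inner_add_right inner_commute ee1 ee2)
  have "n^2 > 0" using n2 F1 by simp
  then have "n \<noteq> 0" by auto
  moreover have "n \<ge> 0" by (simp add: n_def)
  ultimately have npos: "n > 0" by linarith
  define u where "u = (1 / n) *\<^sub>R (e1 + e2)"
  have nu: "norm u = 1" using npos by (simp add: u_def n_def)
  have i1: "inner e1 u = (1 + F) / n"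
    using ne1 by (simp add: u_def F_def inner_add_right power2_norm_eq_inner[symmetric])
  have i2: "inner e2 u = (1 + F) / n"
    using ne2 by (simp add: u_def F_def inner_add_right inner_commute power2_norm_eq_inner[symmetric])
  have cn: "c * n \<le> 1 + F"
  proof (rule power2_le_imp_le)
    have "(c * n)^2 = c^2 * (2 + 2 * F)" by (simp add: power_mult_distrib n2)
    also have "\<dots> \<le> (1 + F)^2"
    proof -
      have "(1 + F)^2 - c^2 * (2 + 2 * F) = (1 + F) * (1 + F - 2 * c^2)" by (simp add: power2_eq_square algebra_simps)
      also have "\<dots> \<ge> 0" using F1 FE by simp
      finally show ?thesis by simp
    qed
    finally show "(c * n)^2 \<le> (1 + F)^2" .
  qed (use F1 in simp)
  have ce: "c \<le> (1 + F) / n" using cn npos by (simp add: pos_le_divide_eq)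
  have "inner v1 u = norm v1 * inner e1 u" using N1 by (simp add: e1_def)
  moreover have "norm v1 * c \<le> norm v1 * ((1 + F) / n)" using ce by (rule mult_left_mono) simp
  ultimately have g1: "norm v1 * c \<le> inner v1 u" using i1 by simp
  have "inner v2 u = norm v2 * inner e2 u" using N2 by (simp add: e2_def)
  moreover have "norm v2 * c \<le> norm v2 * ((1 + F) / n)" using ce by (rule mult_left_mono) simp
  ultimately have g2: "norm v2 * c \<le> inner v2 u" using i2 by simp
  show ?thesis using nu g1 g2 by blast
qed





lemma lb_scalar:
  fixes X h \<alpha> :: real
  assumes h: "h > 0" and a0: "0 < \<alpha>" and a1: "\<alpha> \<le> 1/10"
  defines "L \<equiv> 4 * \<alpha> * h * (1 + 2 * \<alpha>)"
  shows "(2 * (cos \<alpha>)^2 - 1) * (sqrt (X^2 + h^2) * sqrt (X^2 + (h + L)^2)) \<le> X^2 + h * (h + L)"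
proof -
  define s where "s = sin \<alpha>"
  define c where "c = cos \<alpha>"
  define C where "C = 2 * c^2 - 1"
  define K where "K = X^2 + h * (h + L)"
  have sc1: "s^2 + c^2 = 1" unfolding s_def c_def by simp
  have CC: "C = c^2 - s^2" using sc1 unfolding C_def by linarith
  have tf: "\<alpha> * C \<le> s * c" using trig_facts(5)[OF a0 a1] CC unfolding s_def c_def by simp
  have s0: "s > 0" using trig_facts(1)[OF a0 a1] s_def by simp
  have c0: "c > 0" using trig_facts(4)[OF a0 a1] c_def by simp
  have L0: "L \<ge> 0" unfolding L_def using a0 h by simp
  have K0: "K \<ge> 0" unfolding K_def using h L0 by simp
  have prod: "(X^2 + h^2) * (X^2 + (h + L)^2) = K^2 + X^2 * L^2"
    unfolding K_def by algebra
  show ?thesis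
  proof (cases "C \<le> 0")
    case True
    then have "C * (sqrt (X^2 + h^2) * sqrt (X^2 + (h + L)^2)) \<le> 0"
      by (simp add: mult_nonpos_nonneg)
    then show ?thesis using K0 unfolding C_def c_def K_def by linarith
  next
    case False
    then have Cp: "C > 0" by simp
    have hh: "h * (h + L) \<ge> (h * (1 + 2 * \<alpha>))^2"
    proof -
      have "h * (h + L) = h^2 * (1 + 4 * \<alpha> + 8 * \<alpha>^2)" unfolding L_def by algebra
      moreover have "(h * (1 + 2 * \<alpha>))^2 = h^2 * (1 + 4 * \<alpha> + 4 * \<alpha>^2)" by algebra
      moreover have "h^2 * (1 + 4 * \<alpha> + 4 * \<alpha>^2) \<le> h^2 * (1 + 4 * \<alpha> + 8 * \<alpha>^2)"
        using a0 by (intro mult_left_mono) simp_all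
      ultimately show ?thesis by simp
    qed
    have amgm: "2 * \<bar>X\<bar> * (h * (1 + 2 * \<alpha>)) \<le> X^2 + (h * (1 + 2 * \<alpha>))^2"
    proof -
      have "0 \<le> (\<bar>X\<bar> - h * (1 + 2 * \<alpha>))^2" by (rule zero_le_power2)
      then show ?thesis unfolding power2_diff power2_abs by linarith
    qed
    have Kb: "2 * \<bar>X\<bar> * (h * (1 + 2 * \<alpha>)) \<le> K" using amgm hh unfolding K_def by linarith
    have step: "C * \<bar>X\<bar> * L \<le> 2 * s * c * K"
    proof -
      have "C * \<bar>X\<bar> * L = (\<alpha> * C) * (4 * \<bar>X\<bar> * h * (1 + 2 * \<alpha>))" unfolding L_def by (simp only: mult_ac)
      also have "\<dots> \<le> (s * c) * (4 * \<bar>X\<bar> * h * (1 + 2 * \<alpha>))"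
        using tf h a0 by (intro mult_right_mono) simp_all
      also have "\<dots> = 2 * s * c * (2 * \<bar>X\<bar> * (h * (1 + 2 * \<alpha>)))" by (simp only: mult_ac mult_numeral_left_semiring_numeral) (simp add: mult_ac)
      also have "\<dots> \<le> 2 * s * c * K" using Kb s0 c0 by (intro mult_left_mono) simp_all
      finally show ?thesis .
    qed
    have sq: "(C * \<bar>X\<bar> * L)^2 \<le> (2 * s * c * K)^2"
      using step Cp L0 by (intro power_mono) simp_all
    have oneC: "1 - C^2 = 4 * s^2 * c^2"
    proof -
      have "1 - C^2 = (1 - C) * (1 + C)" by algebra
      also have "1 - C = 2 * s^2" using sc1 unfolding C_def by linarith
      also have "1 + C = 2 * c^2" unfolding C_def by simp
      finally show ?thesis by simp
    qed
    have "(C * (sqrt (X^2 + h^2) * sqrt (X^2 + (h + L)^2)))^2 = C^2 * (K^2 + X^2 * L^2)"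
    proof -
      have "(C * (sqrt (X^2 + h^2) * sqrt (X^2 + (h + L)^2)))^2 = C^2 * ((sqrt (X^2 + h^2))^2 * (sqrt (X^2 + (h + L)^2))^2)"
        by (simp only: power_mult_distrib)
      also have "\<dots> = C^2 * ((X^2 + h^2) * (X^2 + (h + L)^2))"
        by (simp only: real_sqrt_pow2 zero_le_power2 add_nonneg_nonneg)
      finally show ?thesis unfolding prod .
    qed
    also have "\<dots> \<le> K^2"
    proof -
      have "C^2 * X^2 * L^2 = (C * \<bar>X\<bar> * L)^2" by (simp only: power_mult_distrib power2_abs)
      also have "\<dots> \<le> (2 * s * c * K)^2" by (rule sq)
      also have "\<dots> = (1 - C^2) * K^2" unfolding oneC by algebra
      finally have A: "C^2 * X^2 * L^2 \<le> (1 - C^2) * K^2" .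
      have "C^2 * (K^2 + X^2 * L^2) = C^2 * X^2 * L^2 + C^2 * K^2" by algebra
      also have "\<dots> \<le> (1 - C^2) * K^2 + C^2 * K^2" using A by (rule add_right_mono)
      also have "\<dots> = K^2" by algebra
      finally show ?thesis .
    qed
    finally have "C * (sqrt (X^2 + h^2) * sqrt (X^2 + (h + L)^2)) \<le> K"
      by (rule power2_le_imp_le[OF _ K0])
    then show ?thesis unfolding C_def c_def K_def .
  qed
qed

lemma lower_bound:
  fixes h \<alpha> :: real and g :: pt
  assumes h: "h > 0" and a0: "0 < \<alpha>" and a1: "\<alpha> \<le> 1/10" and g: "g \<in> ground"
  shows "ereal (4 * \<alpha> * h * (1 + 2 * \<alpha>)) \<le> eps \<alpha> g (viewline h)"
proof -
  define L where "L = 4 * \<alpha> * h * (1 + 2 * \<alpha>)"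
  define a where "a = fst g"
  have ga: "g = (a, 0)" using g unfolding ground_def a_def by (cases g) auto
  define p :: pt where "p = (a, - L)"
  have pi3: "3 < pi" by (rule pi_gt3)
  have aa: "0 \<le> \<alpha>" "\<alpha> \<le> pi" using a0 a1 pi3 by auto
  have c0: "cos \<alpha> > 0" using trig_facts(4)[OF a0 a1] .
  have L0: "L \<ge> 0" unfolding L_def using a0 h by simp
  have ex: "\<exists>u. norm u = 1 \<and> g \<in> wedge \<alpha> s u \<and> p \<in> wedge \<alpha> s u" if s: "s \<in> viewline h" for s
  proof -
    define y where "y = fst s"
    have sy: "s = (y, h)" using s unfolding viewline_def y_def by (cases s) auto
    define X where "X = a - y"
    have v1: "g - s = (X, - h)" using ga sy X_def by simp
    have v2: "p - s = (X, - (h + L))" using p_def sy X_def by simp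
    have n1: "norm (g - s) = sqrt (X^2 + h^2)" unfolding v1 norm_pt by simp
    have n2: "norm (p - s) = sqrt (X^2 + (h + L)^2)" unfolding v2 norm_pt by (simp only: fst_conv snd_conv power2_minus)
    have inn: "inner (g - s) (p - s) = X^2 + h * (h + L)" unfolding v1 v2 inner_pt
      by (simp only: fst_conv snd_conv) algebra
    have nz1: "g - s \<noteq> 0" using v1 h by (auto simp: zero_prod_def)
    have nz2: "p - s \<noteq> 0" using v2 h L0 by (auto simp: zero_prod_def)
    have E: "(2 * (cos \<alpha>)^2 - 1) * (norm (g - s) * norm (p - s)) \<le> inner (g - s) (p - s)"
      unfolding n1 n2 inn L_def using lb_scalar[OF h a0 a1, of X] by simp
    obtain u where u: "norm u = 1" "norm (g - s) * cos \<alpha> \<le> inner (g - s) u"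
      "norm (p - s) * cos \<alpha> \<le> inner (p - s) u"
      using bisector[OF nz1 nz2 c0 E] by blast
    have "g \<in> wedge \<alpha> s u" using u(2) wedge_iff[OF u(1) aa, of g s] by simp
    moreover have "p \<in> wedge \<alpha> s u" using u(3) wedge_iff[OF u(1) aa, of p s] by simp
    ultimately show ?thesis using u(1) by blast
  qed
  define U where "U = (\<lambda>s. SOME u. norm u = 1 \<and> g \<in> wedge \<alpha> s u \<and> p \<in> wedge \<alpha> s u)"
  have U: "norm (U s) = 1 \<and> g \<in> wedge \<alpha> s (U s) \<and> p \<in> wedge \<alpha> s (U s)" if "s \<in> viewline h" for s
    unfolding U_def using someI_ex[OF ex[OF that]] .
  define W where "W = (\<lambda>s. wedge \<alpha> s (U s))"
  have Wad: "\<forall>s\<in>viewline h. W s \<in> wedges \<alpha> g s"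
  proof
    fix s assume s: "s \<in> viewline h"
    show "W s \<in> wedges \<alpha> g s" unfolding W_def wedges_def
      apply (rule CollectI, rule exI[of _ "U s"]) using U[OF s] by simp
  qed
  have gp: "g \<in> (\<Inter>s\<in>viewline h. W s)" "p \<in> (\<Inter>s\<in>viewline h. W s)"
  proof -
    show "g \<in> (\<Inter>s\<in>viewline h. W s)"
    proof (rule INT_I)
      fix s assume s: "s \<in> viewline h" show "g \<in> W s" unfolding W_def using U[OF s] by simp
    qed
    show "p \<in> (\<Inter>s\<in>viewline h. W s)"
    proof (rule INT_I)
      fix s assume s: "s \<in> viewline h" show "p \<in> W s" unfolding W_def using U[OF s] by simp
    qed
  qed
  have dgp: "dist g p = L" unfolding ga p_def dist_norm norm_pt using L0 by simp
  have m1: "ereal (dist g p) \<in> {ereal (dist x y) | x y. x \<in> (\<Inter>s\<in>viewline h. W s) \<and> y \<in> (\<Inter>s\<in>viewline h. W s)}"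
    apply (rule CollectI, rule exI[of _ g], rule exI[of _ p]) using gp by simp
  have "ereal L \<le> ediam (\<Inter>s\<in>viewline h. W s)"
    unfolding ediam_def using Sup_upper[OF m1] dgp by simp
  also have "\<dots> \<le> eps \<alpha> g (viewline h)"
  proof -
    have m2: "ediam (\<Inter>s\<in>viewline h. W s) \<in> {ediam (\<Inter>s\<in>viewline h. W' s) | W'. \<forall>s\<in>viewline h. W' s \<in> wedges \<alpha> g s}"
      apply (rule CollectI, rule exI[of _ W]) using Wad by simp
    show ?thesis unfolding eps_def by (rule Sup_upper[OF m2])
  qed
  finally show ?thesis unfolding L_def .
qed



lemma unit_close:
  fixes u v :: pt
  assumes u: "norm u = 1" and v: "v \<noteq> 0" and w: "norm v * c \<le> inner v u"
    and c: "1 - \<alpha>^2/2 \<le> c" and a: "0 \<le> \<alpha>"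
  shows "norm (u - (1 / norm v) *\<^sub>R v) \<le> \<alpha>"
proof -
  define e where "e = (1 / norm v) *\<^sub>R v"
  have N: "norm v > 0" using v by simp
  have ne: "norm e = 1" using N by (simp add: e_def)
  have ie: "inner v u = norm v * inner e u" using N by (simp add: e_def)
  have "norm v * c \<le> norm v * inner e u" using w ie by simp
  then have ce: "c \<le> inner e u" using N by (simp add: mult_le_cancel_left_pos)
  have uu: "inner u u = 1" using u by (simp add: power2_norm_eq_inner[symmetric])
  have ee: "inner e e = 1" using ne by (simp add: power2_norm_eq_inner[symmetric])
  have "(norm (u - e))^2 = inner u u - 2 * inner e u + inner e e"
    unfolding power2_norm_eq_inner by (simp add: inner_diff_left inner_diff_right inner_commute)
  also have "\<dots> = 2 - 2 * inner e u" using uu ee by simp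
  also have "\<dots> \<le> \<alpha>^2" using ce c by linarith
  finally have "(norm (u - e))^2 \<le> \<alpha>^2" .
  then have "norm (u - e) \<le> \<alpha>" by (rule power2_le_imp_le[OF _ a])
  then show ?thesis unfolding e_def .
qed

lemma dot_perturb:
  fixes u1 u2 e1 e2 :: pt
  assumes "norm u2 = 1" "norm e1 = 1" "norm (u1 - e1) \<le> \<alpha>" "norm (u2 - e2) \<le> \<alpha>"
  shows "\<bar>inner u1 u2\<bar> \<le> \<bar>inner e1 e2\<bar> + 2 * \<alpha>"
proof -
  have eq: "inner u1 u2 = inner e1 e2 + inner (u1 - e1) u2 + inner e1 (u2 - e2)"
    by (simp add: inner_diff_left inner_diff_right)
  have 1: "\<bar>inner (u1 - e1) u2\<bar> \<le> \<alpha>"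
    using Cauchy_Schwarz_ineq2[of "u1 - e1" u2] assms by simp
  have 2: "\<bar>inner e1 (u2 - e2)\<bar> \<le> \<alpha>"
    using Cauchy_Schwarz_ineq2[of e1 "u2 - e2"] assms by simp
  show ?thesis using eq 1 2 by linarith
qed

lemma delta_facts:
  fixes t :: real
  assumes t1: "-1/2 \<le> t" and t2: "t \<le> 1/2"
  defines "d1 \<equiv> sqrt ((t + 1)^2 + 1)" and "d2 \<equiv> sqrt ((t - 1)^2 + 1)"
  shows "d1^2 = (t + 1)^2 + 1" "d2^2 = (t - 1)^2 + 1" "1 \<le> d1" "1 \<le> d2"
    "d1 \<le> 181/100" "d2 \<le> 181/100" "d1^2 + d2^2 \<le> 9/2" "d1 + d2 \<le> 3"
    "d1 * d2 \<le> 2016/1000" "2 \<le> d1 * d2" "t^2 \<le> 1/4"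
proof -
  show s1: "d1^2 = (t + 1)^2 + 1" unfolding d1_def by (simp add: add_nonneg_nonneg)
  show s2: "d2^2 = (t - 1)^2 + 1" unfolding d2_def by (simp add: add_nonneg_nonneg)
  show "1 \<le> d1" unfolding d1_def by simp
  show "1 \<le> d2" unfolding d2_def by simp
  have tt: "t^2 \<le> 1/4"
  proof -
    have "\<bar>t\<bar> \<le> 1/2" using t1 t2 by linarith
    then have "\<bar>t\<bar>^2 \<le> (1/2)^2" by (rule power_mono) simp
    then show ?thesis by (simp add: power2_eq_square)
  qed
  then show "t^2 \<le> 1/4" .
  have a1: "(t + 1)^2 \<le> 9/4"
  proof -
    have "(t + 1)^2 \<le> (3/2)^2" by (rule power_mono) (use t1 t2 in linarith)+
    then show ?thesis by (simp add: power2_eq_square)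
  qed
  have a2: "(t - 1)^2 \<le> 9/4"
  proof -
    have "(1 - t)^2 \<le> (3/2)^2" by (rule power_mono) (use t1 t2 in linarith)+
    moreover have "(1 - t)^2 = (t - 1)^2" by algebra
    ultimately show ?thesis by (simp add: power2_eq_square)
  qed
  have d10: "0 \<le> d1" unfolding d1_def by simp
  have d20: "0 \<le> d2" unfolding d2_def by simp
  have "d1^2 \<le> (181/100)^2" using s1 a1 by (simp add: power2_eq_square)
  then show "d1 \<le> 181/100" by (rule power2_le_imp_le) simp
  have "d2^2 \<le> (181/100)^2" using s2 a2 by (simp add: power2_eq_square)
  then show "d2 \<le> 181/100" by (rule power2_le_imp_le) simp
  have sum: "d1^2 + d2^2 = 4 + 2 * t^2" unfolding s1 s2 by algebra
  then show P1: "d1^2 + d2^2 \<le> 9/2" using tt by linarith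
  have "(d1 + d2)^2 \<le> 2 * (d1^2 + d2^2)"
  proof -
    have "0 \<le> (d1 - d2)^2" by (rule zero_le_power2)
    moreover have "2 * (d1^2 + d2^2) - (d1 + d2)^2 = (d1 - d2)^2" by algebra
    ultimately show ?thesis by linarith
  qed
  then have "(d1 + d2)^2 \<le> 3^2" using P1 by simp
  then show "d1 + d2 \<le> 3" by (rule power2_le_imp_le) simp
  have pr: "(d1 * d2)^2 = 4 + (t^2)^2"
  proof -
    have "(d1 * d2)^2 = d1^2 * d2^2" by (simp only: power_mult_distrib)
    also have "\<dots> = ((t + 1)^2 + 1) * ((t - 1)^2 + 1)" unfolding s1 s2 ..
    also have "\<dots> = 4 + (t^2)^2" by algebra
    finally show ?thesis .
  qed
  have t4: "(t^2)^2 \<le> 1/16"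
  proof -
    have "(t^2)^2 \<le> (1/4)^2" by (rule power_mono[OF tt]) simp
    then show ?thesis by (simp add: power2_eq_square)
  qed
  have "(d1 * d2)^2 \<le> (2016/1000)^2" using pr t4 by (simp add: power2_eq_square)
  then show "d1 * d2 \<le> 2016/1000" by (rule power2_le_imp_le) simp
  have "2^2 \<le> (d1 * d2)^2" using pr by simp
  then show "2 \<le> d1 * d2" by (rule power2_le_imp_le) (use d10 d20 in simp)
qed

lemma poly_final:
  fixes \<alpha> :: real
  assumes a0: "0 < \<alpha>" and a1: "\<alpha> \<le> 1/10"
  defines "\<kappa> \<equiv> 1/8 + 2 * \<alpha>"
  shows "18 + 1848/10 * \<alpha> + 47432/100 * \<alpha>^2 + 2 * \<kappa> * (8064/1000 + 924/10 * \<alpha> + 23716/100 * \<alpha>^2)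
     \<le> 99/100 * (1 - \<kappa>^2) * (172/25)^2 * (1 + 2 * \<alpha>)^2"
proof -
  have eq: "99/100 * (1 - \<kappa>^2) * (172/25)^2 * (1 + 2 * \<alpha>)^2
      - (18 + 1848/10 * \<alpha> + 47432/100 * \<alpha>^2 + 2 * \<kappa> * (8064/1000 + 924/10 * \<alpha> + 23716/100 * \<alpha>^2))
     = 6528213/250000 - 988389/12500 * \<alpha> - 15622827/15625 * \<alpha>^2 - 28002172/15625 * \<alpha>^3 - 11715264/15625 * \<alpha>^4"
    unfolding \<kappa>_def by algebra
  have p2: "\<alpha>^2 \<le> \<alpha> / 10"
  proof -
    have "\<alpha> * \<alpha> \<le> \<alpha> * (1/10)" using a0 a1 by (intro mult_left_mono) simp_all
    then show ?thesis by (simp add: power2_eq_square)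
  qed
  have p3: "\<alpha>^3 \<le> \<alpha>^2 / 10"
  proof -
    have "\<alpha>^2 * \<alpha> \<le> \<alpha>^2 * (1/10)" using a0 a1 by (intro mult_left_mono) simp_all
    then show ?thesis by (simp add: power3_eq_cube power2_eq_square)
  qed
  have p4: "\<alpha>^4 \<le> \<alpha>^3 / 10"
  proof -
    have "\<alpha>^3 * \<alpha> \<le> \<alpha>^3 * (1/10)" using a0 a1 by (intro mult_left_mono) simp_all
    then show ?thesis by (simp add: power3_eq_cube power4_eq_xxxx)
  qed
  show ?thesis using eq p2 p3 p4 a0 a1 by linarith
qed


lemma F_bound:
  fixes d1 d2 \<alpha> \<kappa> :: real
  assumes d10: "0 \<le> d1" and d20: "0 \<le> d2" and P1: "d1^2 + d2^2 \<le> 9/2" and P2: "d1 + d2 \<le> 3"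
    and P3: "d1 * d2 \<le> 2016/1000" and a0: "0 < \<alpha>" and k0: "0 \<le> \<kappa>"
  shows "(2 * d1 + 154/10 * \<alpha>)^2 + (2 * d2 + 154/10 * \<alpha>)^2 + 2 * \<kappa> * (2 * d1 + 154/10 * \<alpha>) * (2 * d2 + 154/10 * \<alpha>)
     \<le> 18 + 1848/10 * \<alpha> + 47432/100 * \<alpha>^2 + 2 * \<kappa> * (8064/1000 + 924/10 * \<alpha> + 23716/100 * \<alpha>^2)"
proof -
  have eq: "(2 * d1 + 154/10 * \<alpha>)^2 + (2 * d2 + 154/10 * \<alpha>)^2 + 2 * \<kappa> * (2 * d1 + 154/10 * \<alpha>) * (2 * d2 + 154/10 * \<alpha>)
     = 4 * (d1^2 + d2^2) + 616/10 * (\<alpha> * (d1 + d2)) + 47432/100 * \<alpha>^2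
       + 2 * \<kappa> * (4 * (d1 * d2) + 308/10 * (\<alpha> * (d1 + d2)) + 23716/100 * \<alpha>^2)"
    by algebra
  have h1: "\<alpha> * (d1 + d2) \<le> \<alpha> * 3" using P2 a0 by (intro mult_left_mono) simp_all
  have inner: "4 * (d1 * d2) + 308/10 * (\<alpha> * (d1 + d2)) + 23716/100 * \<alpha>^2 \<le> 8064/1000 + 924/10 * \<alpha> + 23716/100 * \<alpha>^2"
    using h1 P3 by linarith
  have h2: "2 * \<kappa> * (4 * (d1 * d2) + 308/10 * (\<alpha> * (d1 + d2)) + 23716/100 * \<alpha>^2)
      \<le> 2 * \<kappa> * (8064/1000 + 924/10 * \<alpha> + 23716/100 * \<alpha>^2)"
    using inner k0 by (intro mult_left_mono) simp_all
  have A: "4 * (d1^2 + d2^2) \<le> 18" using mult_left_mono[OF P1, of 4] by simp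
  have B: "616/10 * (\<alpha> * (d1 + d2)) \<le> 1848/10 * \<alpha>" using h1 by linarith
  show ?thesis unfolding eq by (rule add_mono[OF add_mono[OF add_mono[OF A B] order_refl] h2])
qed

lemma loc_scalar:
  fixes cc ss \<kappa> \<alpha> h R :: real
  assumes c2: "99/100 \<le> cc^2" and k0: "0 \<le> \<kappa>" and k1: "\<kappa> \<le> 13/40"
    and s0: "0 \<le> ss" and sa: "ss \<le> \<alpha>" and a1: "\<alpha> \<le> 1/10" and R0: "0 \<le> R" and h: "0 < h"
    and main: "cc^2 * R^2 * (1 - \<kappa>^2) \<le> ss^2 * ((362/100 * h + R)^2 + (362/100 * h + R)^2
                  + 2 * \<kappa> * (362/100 * h + R) * (362/100 * h + R))"
  shows "R \<le> 77/10 * (\<alpha> * h)"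
proof -
  define B where "B = 362/100 * h + R"
  have B0: "0 \<le> B" unfolding B_def using h R0 by simp
  have e1: "cc^2 * R^2 * (1 - \<kappa>^2) = (1 + \<kappa>) * (cc^2 * (1 - \<kappa>) * R^2)" by algebra
  have e2: "ss^2 * (B^2 + B^2 + 2 * \<kappa> * B * B) = (1 + \<kappa>) * (2 * ss^2 * B^2)" by algebra
  have "cc^2 * R^2 * (1 - \<kappa>^2) \<le> ss^2 * (B^2 + B^2 + 2 * \<kappa> * B * B)"
    using main unfolding B_def .
  then have "(1 + \<kappa>) * (cc^2 * (1 - \<kappa>) * R^2) \<le> (1 + \<kappa>) * (2 * ss^2 * B^2)"
    unfolding e1 e2 .
  then have m: "cc^2 * (1 - \<kappa>) * R^2 \<le> 2 * ss^2 * B^2" using k0 by (simp add: mult_le_cancel_left_pos)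
  have lc: "6561/10000 \<le> cc^2 * (1 - \<kappa>)"
  proof -
    have "99/100 * (27/40) \<le> cc^2 * (1 - \<kappa>)" using c2 k1 by (intro mult_mono) simp_all
    then show ?thesis by simp
  qed
  have "(81/100 * R)^2 = 6561/10000 * R^2" by (simp add: power2_eq_square)
  also have "\<dots> \<le> cc^2 * (1 - \<kappa>) * R^2" using lc by (intro mult_right_mono) simp_all
  also have "\<dots> \<le> 2 * ss^2 * B^2" by (rule m)
  also have "\<dots> \<le> (142/100 * (ss * B))^2"
  proof -
    have "2 * ss^2 * B^2 \<le> 20164/10000 * (ss^2 * B^2)" by (simp add: mult.assoc)
    also have "\<dots> = (142/100 * (ss * B))^2" by (simp add: power2_eq_square)
    finally show ?thesis .
  qed
  finally have "(81/100 * R)^2 \<le> (142/100 * (ss * B))^2" .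
  then have r1: "81/100 * R \<le> 142/100 * (ss * B)" by (rule power2_le_imp_le) (use s0 B0 in simp)
  have r2: "ss * B \<le> \<alpha> * B" using sa B0 by (intro mult_right_mono) simp_all
  have r3: "\<alpha> * B = 362/100 * (\<alpha> * h) + \<alpha> * R" unfolding B_def by algebra
  have r4: "\<alpha> * R \<le> 1/10 * R" using a1 R0 by (intro mult_right_mono) simp_all
  have ah: "0 \<le> \<alpha> * h" using sa s0 h by simp
  show ?thesis using r1 r2 r3 r4 ah by linarith
qed


lemma upper_geo:
  fixes h \<alpha> a t :: real and u1 u2 p q :: pt
  assumes h: "h > 0" and a0: "0 < \<alpha>" and a1: "\<alpha> \<le> 1/10" and t1: "-1/2 \<le> t" and t2: "t \<le> 1/2"
    and u1: "norm u1 = 1" and u2: "norm u2 = 1"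
    and g1: "(a, 0) \<in> wedge \<alpha> (a - (t + 1) * h, h) u1" and g2: "(a, 0) \<in> wedge \<alpha> (a - (t - 1) * h, h) u2"
    and p1: "p \<in> wedge \<alpha> (a - (t + 1) * h, h) u1" and p2: "p \<in> wedge \<alpha> (a - (t - 1) * h, h) u2"
    and q1: "q \<in> wedge \<alpha> (a - (t + 1) * h, h) u1" and q2: "q \<in> wedge \<alpha> (a - (t - 1) * h, h) u2"
  shows "norm (q - p) \<le> 172/100 * (4 * \<alpha> * h * (1 + 2 * \<alpha>))"
proof -
  define g :: pt where "g = (a, 0)"
  define s1 :: pt where "s1 = (a - (t + 1) * h, h)"
  define s2 :: pt where "s2 = (a - (t - 1) * h, h)"
  note g1 = g1[folded g_def s1_def] and g2 = g2[folded g_def s2_def]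
  note p1 = p1[folded s1_def] and p2 = p2[folded s2_def]
  note q1 = q1[folded s1_def] and q2 = q2[folded s2_def]
  define cc where "cc = cos \<alpha>"
  define ss where "ss = sin \<alpha>"
  have pi3: "3 < pi" by (rule pi_gt3)
  have aa: "0 \<le> \<alpha>" "\<alpha> \<le> pi" using a0 a1 pi3 by linarith+
  have ss0: "0 < ss" and ssa: "ss \<le> \<alpha>" and cca: "1 - \<alpha>^2/2 \<le> cc" and cc0: "0 < cc"
    using trig_facts[OF a0 a1] unfolding cc_def ss_def by auto
  have a2: "\<alpha>^2 \<le> 1/100"
  proof -
    have "\<alpha> * \<alpha> \<le> (1/10) * (1/10)" using a0 a1 by (intro mult_mono) simp_all
    then show ?thesis by (simp add: power2_eq_square)
  qed
  have cc2: "99/100 \<le> cc^2"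
  proof -
    have "199/200 \<le> cc" using cca a2 by linarith
    then have "(199/200)^2 \<le> cc^2" by (rule power_mono) simp
    then show ?thesis by (simp add: power2_eq_square)
  qed
  define d1 where "d1 = sqrt ((t + 1)^2 + 1)"
  define d2 where "d2 = sqrt ((t - 1)^2 + 1)"
  note df = delta_facts[OF t1 t2, folded d1_def d2_def]
  have v1: "g - s1 = ((t + 1) * h, - h)" by (simp add: g_def s1_def)
  have v2: "g - s2 = ((t - 1) * h, - h)" by (simp add: g_def s2_def)
  have D1: "norm (g - s1) = h * d1"
  proof -
    have "norm (g - s1) = sqrt (((t + 1) * h)^2 + (- h)^2)" unfolding v1 norm_pt by (simp only: fst_conv snd_conv)
    also have "((t + 1) * h)^2 + (- h)^2 = h^2 * ((t + 1)^2 + 1)" by algebra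
    also have "sqrt (h^2 * ((t + 1)^2 + 1)) = h * d1" unfolding d1_def real_sqrt_mult using h by simp
    finally show ?thesis .
  qed
  have D2: "norm (g - s2) = h * d2"
  proof -
    have "norm (g - s2) = sqrt (((t - 1) * h)^2 + (- h)^2)" unfolding v2 norm_pt by (simp only: fst_conv snd_conv)
    also have "((t - 1) * h)^2 + (- h)^2 = h^2 * ((t - 1)^2 + 1)" by algebra
    also have "sqrt (h^2 * ((t - 1)^2 + 1)) = h * d2" unfolding d2_def real_sqrt_mult using h by simp
    finally show ?thesis .
  qed
  have d1p: "0 < d1" using df(3) by linarith
  have d2p: "0 < d2" using df(4) by linarith
  have hd1: "0 < h * d1" using h d1p by simp
  have hd2: "0 < h * d2" using h d2p by simp
  have nz1: "g - s1 \<noteq> 0" using D1 hd1 by auto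
  have nz2: "g - s2 \<noteq> 0" using D2 hd2 by auto
  have w1: "norm (g - s1) * cc \<le> inner (g - s1) u1" using g1 wedge_iff[OF u1 aa] unfolding cc_def by blast
  have w2: "norm (g - s2) * cc \<le> inner (g - s2) u2" using g2 wedge_iff[OF u2 aa] unfolding cc_def by blast
  define e1 where "e1 = (1 / norm (g - s1)) *\<^sub>R (g - s1)"
  define e2 where "e2 = (1 / norm (g - s2)) *\<^sub>R (g - s2)"
  have ue1: "norm (u1 - e1) \<le> \<alpha>" unfolding e1_def by (rule unit_close[OF u1 nz1 w1 cca aa(1)])
  have ue2: "norm (u2 - e2) \<le> \<alpha>" unfolding e2_def by (rule unit_close[OF u2 nz2 w2 cca aa(1)])
  have ne1: "norm e1 = 1" using nz1 by (simp add: e1_def)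
  have inn: "inner (g - s1) (g - s2) = t^2 * h^2"
    unfolding v1 v2 inner_pt by (simp only: fst_conv snd_conv) algebra
  have ie: "inner e1 e2 = t^2 / (d1 * d2)"
  proof -
    have "inner e1 e2 = inner (g - s1) (g - s2) / (norm (g - s1) * norm (g - s2))"
      by (simp add: e1_def e2_def)
    also have "\<dots> = (t^2 * h^2) / ((h * d1) * (h * d2))" unfolding inn D1 D2 ..
    also have "\<dots> = t^2 / (d1 * d2)" using h by (simp add: power2_eq_square)
    finally show ?thesis .
  qed
  have ie0: "0 \<le> inner e1 e2" unfolding ie using d1p d2p by simp
  have ie1: "inner e1 e2 \<le> 1/8"
  proof -
    have "t^2 / (d1 * d2) \<le> t^2 / 2" using df(10) by (intro divide_left_mono) simp_all
    then show ?thesis unfolding ie using df(11) by linarith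
  qed
  define \<kappa> where "\<kappa> = 1/8 + 2 * \<alpha>"
  have kabs: "\<bar>inner u1 u2\<bar> \<le> \<kappa>"
    using dot_perturb[OF u2 ne1 ue1 ue2] ie0 ie1 unfolding \<kappa>_def by linarith
  have k0: "0 \<le> \<kappa>" unfolding \<kappa>_def using a0 by simp
  have k1: "\<kappa> \<le> 13/40" unfolding \<kappa>_def using a1 by simp
  have k1': "\<kappa> \<le> 1" using k1 by simp
  have cpos: "cos \<alpha> > 0" using cc0 cc_def by simp
  have spos: "sin \<alpha> \<ge> 0" using ss0 ss_def by simp
  have loc: "norm (r - g) \<le> 77/10 * (\<alpha> * h)" if r1: "r \<in> wedge \<alpha> s1 u1" and r2: "r \<in> wedge \<alpha> s2 u2" for r
  proof -
    define R where "R = norm (r - g)"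
    have tri1: "norm (r - s1) \<le> R + h * d1"
      using norm_triangle_ineq[of "r - g" "g - s1"] D1 unfolding R_def by simp
    have tri2: "norm (r - s2) \<le> R + h * d2"
      using norm_triangle_ineq[of "r - g" "g - s2"] D2 unfolding R_def by simp
    have hb1: "h * d1 \<le> h * (181/100)" using df(5) h by (intro mult_left_mono) simp_all
    have hb2: "h * d2 \<le> h * (181/100)" using df(6) h by (intro mult_left_mono) simp_all
    have B1: "norm (r - s1) + norm (g - s1) \<le> 362/100 * h + R" using tri1 hb1 D1 by linarith
    have B2: "norm (r - s2) + norm (g - s2) \<le> 362/100 * h + R" using tri2 hb2 D2 by linarith
    have tw: "(cos \<alpha>)^2 * (norm (g - r))^2 * (1 - \<kappa>^2)
        \<le> (sin \<alpha>)^2 * ((362/100 * h + R)^2 + (362/100 * h + R)^2 + 2 * \<kappa> * (362/100 * h + R) * (362/100 * h + R))"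
      by (rule two_wedge[OF u1 u2 kabs k1' aa cpos spos r1 g1 r2 g2 B1 B2])
    have "norm (g - r) = R" unfolding R_def by (rule norm_minus_commute)
    then have main: "cc^2 * R^2 * (1 - \<kappa>^2)
        \<le> ss^2 * ((362/100 * h + R)^2 + (362/100 * h + R)^2 + 2 * \<kappa> * (362/100 * h + R) * (362/100 * h + R))"
      using tw unfolding cc_def ss_def by simp
    have R0: "0 \<le> R" unfolding R_def by simp
    show ?thesis unfolding R_def[symmetric]
      by (rule loc_scalar[OF cc2 k0 k1 less_imp_le[OF ss0] ssa a1 R0 h main])
  qed
  have lp: "norm (p - g) \<le> 77/10 * (\<alpha> * h)" by (rule loc[OF p1 p2])
  have lq: "norm (q - g) \<le> 77/10 * (\<alpha> * h)" by (rule loc[OF q1 q2])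
  define B1 where "B1 = h * (2 * d1 + 154/10 * \<alpha>)"
  define B2 where "B2 = h * (2 * d2 + 154/10 * \<alpha>)"
  have Bp1: "norm (p - s1) + norm (q - s1) \<le> B1"
  proof -
    have "norm (p - s1) \<le> norm (p - g) + norm (g - s1)" using norm_triangle_ineq[of "p - g" "g - s1"] by simp
    moreover have "norm (q - s1) \<le> norm (q - g) + norm (g - s1)" using norm_triangle_ineq[of "q - g" "g - s1"] by simp
    moreover have "B1 = 2 * (h * d1) + 154/10 * (\<alpha> * h)" unfolding B1_def by algebra
    ultimately show ?thesis using lp lq D1 by linarith
  qed
  have Bp2: "norm (p - s2) + norm (q - s2) \<le> B2"
  proof -
    have "norm (p - s2) \<le> norm (p - g) + norm (g - s2)" using norm_triangle_ineq[of "p - g" "g - s2"] by simp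
    moreover have "norm (q - s2) \<le> norm (q - g) + norm (g - s2)" using norm_triangle_ineq[of "q - g" "g - s2"] by simp
    moreover have "B2 = 2 * (h * d2) + 154/10 * (\<alpha> * h)" unfolding B2_def by algebra
    ultimately show ?thesis using lp lq D2 by linarith
  qed
  have tw: "(cos \<alpha>)^2 * (norm (q - p))^2 * (1 - \<kappa>^2) \<le> (sin \<alpha>)^2 * (B1^2 + B2^2 + 2 * \<kappa> * B1 * B2)"
    by (rule two_wedge[OF u1 u2 kabs k1' aa cpos spos p1 q1 p2 q2 Bp1 Bp2])
  define F where "F = (2 * d1 + 154/10 * \<alpha>)^2 + (2 * d2 + 154/10 * \<alpha>)^2 + 2 * \<kappa> * (2 * d1 + 154/10 * \<alpha>) * (2 * d2 + 154/10 * \<alpha>)"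
  define G where "G = 18 + 1848/10 * \<alpha> + 47432/100 * \<alpha>^2 + 2 * \<kappa> * (8064/1000 + 924/10 * \<alpha> + 23716/100 * \<alpha>^2)"
  define Q where "Q = 99/100 * (1 - \<kappa>^2) * (172/25)^2 * (1 + 2 * \<alpha>)^2"
  have BF: "B1^2 + B2^2 + 2 * \<kappa> * B1 * B2 = h^2 * F" unfolding B1_def B2_def F_def by algebra
  have FG: "F \<le> G" unfolding F_def G_def
    by (rule F_bound[OF less_imp_le[OF d1p] less_imp_le[OF d2p] df(7) df(8) df(9) a0 k0])
  have GQ: "G \<le> Q" unfolding G_def Q_def \<kappa>_def by (rule poly_final[OF a0 a1])
  have F0: "0 \<le> F" unfolding F_def using k0 d1p d2p a0 by simp
  have ss2: "ss^2 \<le> \<alpha>^2" using ss0 ssa by (intro power_mono) simp_all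
  define T where "T = 172/100 * (4 * \<alpha> * h * (1 + 2 * \<alpha>))"
  have T0: "0 \<le> T" unfolding T_def using a0 h by simp
  have omk: "0 < 1 - \<kappa>^2"
  proof -
    have "\<kappa>^2 \<le> (13/40)^2" using k0 k1 by (intro power_mono) simp_all
    then show ?thesis by (simp add: power2_eq_square)
  qed
  have ccp: "0 < cc^2 * (1 - \<kappa>^2)" using cc0 omk by simp
  have "(cc^2 * (1 - \<kappa>^2)) * (norm (q - p))^2 = (cos \<alpha>)^2 * (norm (q - p))^2 * (1 - \<kappa>^2)"
    unfolding cc_def by algebra
  also have "\<dots> \<le> (sin \<alpha>)^2 * (B1^2 + B2^2 + 2 * \<kappa> * B1 * B2)" by (rule tw)
  also have "\<dots> = ss^2 * (h^2 * F)" unfolding BF ss_def ..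
  also have "\<dots> \<le> \<alpha>^2 * (h^2 * F)" using ss2 F0 by (intro mult_right_mono) simp_all
  also have "\<dots> \<le> \<alpha>^2 * (h^2 * G)" using FG by (intro mult_left_mono) simp_all
  also have "\<dots> \<le> \<alpha>^2 * (h^2 * Q)" using GQ by (intro mult_left_mono) simp_all
  also have "\<dots> = (99/100 * (1 - \<kappa>^2)) * T^2" unfolding Q_def T_def by algebra
  also have "\<dots> \<le> (cc^2 * (1 - \<kappa>^2)) * T^2" using cc2 omk by (intro mult_right_mono) simp_all
  finally have "(cc^2 * (1 - \<kappa>^2)) * (norm (q - p))^2 \<le> (cc^2 * (1 - \<kappa>^2)) * T^2" .
  then have "(norm (q - p))^2 \<le> T^2" using ccp by (simp add: mult_le_cancel_left_pos)
  then have "norm (q - p) \<le> T" by (rule power2_le_imp_le[OF _ T0])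
  then show ?thesis unfolding T_def .
qed


theorem theorem3:
  fixes h \<alpha> :: real and g :: pt
  assumes "h > 0" and "0 < \<alpha>" and "\<alpha> \<le> 1/10" and "g \<in> ground"
  shows "\<exists>si\<in>grid h. \<exists>sj\<in>grid h.
           eps \<alpha> g {si, sj} \<le> ereal (172/100) * eps \<alpha> g (viewline h)"
proof -
  note h = assms(1) and a0 = assms(2) and a1 = assms(3) and gg = assms(4)
  define a where "a = fst g"
  have ga: "g = (a, 0)" using gg unfolding ground_def a_def by (cases g) simp
  define k where "k = \<lfloor>a / h + 1/2\<rfloor>"
  define t where "t = a / h - of_int k"
  have kf1: "of_int k \<le> a / h + 1/2" unfolding k_def by (rule of_int_floor_le)
  have kf2: "a / h + 1/2 < of_int k + 1" unfolding k_def by (rule real_of_int_floor_add_one_gt)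
  have t1: "-1/2 \<le> t" unfolding t_def using kf1 by linarith
  have t2: "t \<le> 1/2" unfolding t_def using kf2 by linarith
  define si :: pt where "si = (of_int (k - 1) * h, h)"
  define sj :: pt where "sj = (of_int (k + 1) * h, h)"
  have si_g: "si \<in> grid h" unfolding grid_def si_def by blast
  have sj_g: "sj \<in> grid h" unfolding grid_def sj_def by blast
  have ah: "a = (t + of_int k) * h" unfolding t_def using h by (simp add: field_simps)
  have si_eq: "si = (a - (t + 1) * h, h)" unfolding si_def ah by (simp add: algebra_simps)
  have sj_eq: "sj = (a - (t - 1) * h, h)" unfolding sj_def ah by (simp add: algebra_simps)
  define T where "T = 172/100 * (4 * \<alpha> * h * (1 + 2 * \<alpha>))"
  have up: "eps \<alpha> g {si, sj} \<le> ereal T"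
    unfolding eps_def
  proof (rule Sup_least)
    fix z assume "z \<in> {ediam (\<Inter>s\<in>{si, sj}. W s) | W. \<forall>s\<in>{si, sj}. W s \<in> wedges \<alpha> g s}"
    then obtain W where z: "z = ediam (\<Inter>s\<in>{si, sj}. W s)" and W: "\<forall>s\<in>{si, sj}. W s \<in> wedges \<alpha> g s"
      by blast
    have "W si \<in> wedges \<alpha> g si" using W by simp
    then obtain u1 where u1: "W si = wedge \<alpha> si u1" "norm u1 = 1" "g \<in> wedge \<alpha> si u1"
      unfolding wedges_def by blast
    have "W sj \<in> wedges \<alpha> g sj" using W by simp
    then obtain u2 where u2: "W sj = wedge \<alpha> sj u2" "norm u2 = 1" "g \<in> wedge \<alpha> sj u2"
      unfolding wedges_def by blast
    have I: "(\<Inter>s\<in>{si, sj}. W s) = wedge \<alpha> si u1 \<inter> wedge \<alpha> sj u2" using u1(1) u2(1) by simp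
    show "z \<le> ereal T" unfolding z ediam_def
    proof (rule Sup_least)
      fix y assume "y \<in> {ereal (dist x y) | x y. x \<in> (\<Inter>s\<in>{si, sj}. W s) \<and> y \<in> (\<Inter>s\<in>{si, sj}. W s)}"
      then obtain x1 x2 where y: "y = ereal (dist x1 x2)" and x1: "x1 \<in> wedge \<alpha> si u1 \<inter> wedge \<alpha> sj u2"
        and x2: "x2 \<in> wedge \<alpha> si u1 \<inter> wedge \<alpha> sj u2" unfolding I by blast
      have g1: "(a, 0) \<in> wedge \<alpha> (a - (t + 1) * h, h) u1" using u1(3) unfolding ga si_eq .
      have g2: "(a, 0) \<in> wedge \<alpha> (a - (t - 1) * h, h) u2" using u2(3) unfolding ga sj_eq .
      have "norm (x1 - x2) \<le> T" unfolding T_def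
        apply (rule upper_geo[OF h a0 a1 t1 t2 u1(2) u2(2) g1 g2])
        using x1 x2 unfolding si_eq sj_eq by auto
      then show "y \<le> ereal T" unfolding y dist_norm by simp
    qed
  qed
  have low: "ereal (4 * \<alpha> * h * (1 + 2 * \<alpha>)) \<le> eps \<alpha> g (viewline h)"
    by (rule lower_bound[OF h a0 a1 gg])
  have "ereal T = ereal (172/100) * ereal (4 * \<alpha> * h * (1 + 2 * \<alpha>))" unfolding T_def by simp
  also have "\<dots> \<le> ereal (172/100) * eps \<alpha> g (viewline h)"
    by (rule ereal_mult_left_mono[OF low]) simp
  finally have "ereal T \<le> ereal (172/100) * eps \<alpha> g (viewline h)" .
  with up have "eps \<alpha> g {si, sj} \<le> ereal (172/100) * eps \<alpha> g (viewline h)" by (rule order_trans)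
  then show ?thesis using si_g sj_g by blast
qed


end
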